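(* Let $X,Y\subseteq\omega$. If there is an embedding $\mathcal{K}_2^X \hookrightarrow \mathcal{K}_1^Y$ then $X' \le_T Y$.
   Context: $X'$ denotes the Turing jump of $X$. A pca is a set with a partial binary application operation containing distinct $\mathrm{s},\mathrm{k}$ with $\mathrm{k}ab\downarrow=a$, $\mathrm{s}ab\downarrow$, $\mathrm{s}abc\simeq(ac)(bc)$. An embedding of pcas is an injective map $f$ with: if $ab$ is defined then $f(a)f(b)$ is defined and equals $f(ab)$. $\mathcal{K}_1^Y$ is the pca on $\omega$ with $n\cdot m=\Phi^Y_n(m)$, the $n$-th partial $Y$-computable function applied to $m$. $\mathcal{K}_2^X$: elements are the total $X$-computable functions $g:\omega\to\omega$, with $g\cdot h$ the function $n\mapsto\Phi^{g\oplus h}_{g(0)}(n)$ ($\Phi_e$ the $e$-th Turing functional, $(g\oplus h)(2n)=g(n)$, $(g\oplus h)(2n+1)=h(n)$), defined if and only if this function is total. *)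

theory Defs
  imports Main "HOL-Library.Nat_Bijection"
begin

datatype recf =
    Zero | Succ | Ident | Fst | Snd | Oracle
  | Comp recf recf
  | Pair recf recf
  | Rec recf recf
  | Mu recf

inductive eval :: "(nat \<Rightarrow> nat) \<Rightarrow> recf \<Rightarrow> nat \<Rightarrow> nat \<Rightarrow> bool"
  for f :: "nat \<Rightarrow> nat" where
  ev_zero: "eval f Zero x 0"
| ev_succ: "eval f Succ x (Suc x)"
| ev_id: "eval f Ident x x"
| ev_fst: "eval f Fst x (fst (prod_decode x))"
| ev_snd: "eval f Snd x (snd (prod_decode x))"
| ev_oracle: "eval f Oracle x (f x)"
| ev_comp: "eval f d x y \<Longrightarrow> eval f c y z \<Longrightarrow> eval f (Comp c d) x z"
| ev_pair: "eval f c x y \<Longrightarrow> eval f d x z \<Longrightarrow> eval f (Pair c d) x (prod_encode (y, z))"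
| ev_rec0: "eval f c a y \<Longrightarrow> eval f (Rec c d) (prod_encode (a, 0)) y"
| ev_recS: "eval f (Rec c d) (prod_encode (a, n)) y \<Longrightarrow>
             eval f d (prod_encode (prod_encode (a, n), y)) z \<Longrightarrow>
             eval f (Rec c d) (prod_encode (a, Suc n)) z"
| ev_mu: "eval f c (prod_encode (x, n)) 0 \<Longrightarrow>
          (\<forall>i<n. \<exists>y. eval f c (prod_encode (x, i)) (Suc y)) \<Longrightarrow>
          eval f (Mu c) x n"

fun encode :: "recf \<Rightarrow> nat" where
  "encode Zero = prod_encode (0, 0)"
| "encode Succ = prod_encode (1, 0)"
| "encode Ident = prod_encode (2, 0)"
| "encode Fst = prod_encode (3, 0)"
| "encode Snd = prod_encode (4, 0)"
| "encode Oracle = prod_encode (5, 0)"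
| "encode (Comp c d) = prod_encode (6, prod_encode (encode c, encode d))"
| "encode (Pair c d) = prod_encode (7, prod_encode (encode c, encode d))"
| "encode (Rec c d) = prod_encode (8, prod_encode (encode c, encode d))"
| "encode (Mu c) = prod_encode (9, encode c)"

text \<open>Phi f e x y: the e-th Turing functional with oracle f, on input x, converges
with output y. Numbers not encoding any program index the empty function.\<close>

definition Phi :: "(nat \<Rightarrow> nat) \<Rightarrow> nat \<Rightarrow> nat \<Rightarrow> nat \<Rightarrow> bool" where
  "Phi f e x y \<longleftrightarrow> (\<exists>c. encode c = e \<and> eval f c x y)"

definition chi :: "nat set \<Rightarrow> nat \<Rightarrow> nat" where
  "chi A x = (if x \<in> A then 1 else 0)"

definition join :: "(nat \<Rightarrow> nat) \<Rightarrow> (nat \<Rightarrow> nat) \<Rightarrow> nat \<Rightarrow> nat" where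
  "join g h x = (if even x then g (x div 2) else h (x div 2))"

definition computable_in :: "nat set \<Rightarrow> (nat \<Rightarrow> nat) \<Rightarrow> bool" where
  "computable_in X g \<longleftrightarrow> (\<exists>e. \<forall>n. Phi (chi X) e n (g n))"

definition turing_le :: "nat set \<Rightarrow> nat set \<Rightarrow> bool" where
  "turing_le A B \<longleftrightarrow> computable_in B (chi A)"

definition jump :: "nat set \<Rightarrow> nat set" where
  "jump X = {e. \<exists>y. Phi (chi X) e e y}"

definition app1 :: "nat set \<Rightarrow> nat \<Rightarrow> nat \<Rightarrow> nat \<Rightarrow> bool" where
  "app1 Y n m k \<longleftrightarrow> Phi (chi Y) n m k"

definition K2_carrier :: "nat set \<Rightarrow> (nat \<Rightarrow> nat) set" where
  "K2_carrier X = {g. computable_in X g}"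

definition app2 :: "(nat \<Rightarrow> nat) \<Rightarrow> (nat \<Rightarrow> nat) \<Rightarrow> (nat \<Rightarrow> nat) \<Rightarrow> bool" where
  "app2 g h k \<longleftrightarrow> (\<forall>n. Phi (join g h) (g 0) n (k n))"

definition K2_embeds_K1 :: "nat set \<Rightarrow> nat set \<Rightarrow> ((nat \<Rightarrow> nat) \<Rightarrow> nat) \<Rightarrow> bool" where
  "K2_embeds_K1 X Y f \<longleftrightarrow>
     inj_on f (K2_carrier X) \<and>
     (\<forall>g\<in>K2_carrier X. \<forall>h\<in>K2_carrier X. \<forall>k.
        app2 g h k \<longrightarrow> app1 Y (f g) (f h) (f k))"

end

theory Submission
  imports Defs
begin

abbreviation pe where "pe a b \<equiv> prod_encode (a, b)"
abbreviation pfst where "pfst z \<equiv> fst (prod_decode z)"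
abbreviation psnd where "psnd z \<equiv> snd (prod_decode z)"

lemma pfst_pe[simp]: "pfst (pe a b) = a" by (simp add: prod_encode_inverse)
lemma psnd_pe[simp]: "psnd (pe a b) = b" by (simp add: prod_encode_inverse)
lemma pe_split: "pe (pfst z) (psnd z) = z"
  by (metis prod.collapse prod_decode_inverse)

primrec constP :: "nat \<Rightarrow> recf" where
  "constP 0 = Zero"
| "constP (Suc k) = Comp Succ (constP k)"

lemma eval_constP: "eval g (constP k) x k"
  by (induction k) (simp_all add: ev_zero ev_comp[OF _ ev_succ])

definition ifP :: "recf \<Rightarrow> recf \<Rightarrow> recf \<Rightarrow> recf" where
  "ifP c a b = Comp (Rec b (Comp a (Comp Fst Fst))) (Pair Ident c)"

lemma eval_ifP_aux:
  assumes "eval g a x A" "eval g b x B"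
  shows "eval g (Rec b (Comp a (Comp Fst Fst))) (pe x k) (if k \<noteq> 0 then A else B)"
proof (induction k)
  case 0 then show ?case using assms by (simp add: ev_rec0)
next
  case (Suc k)
  have "eval g (Comp Fst Fst) (pe (pe x k) (if k \<noteq> 0 then A else B)) x"
    by (rule ev_comp[OF ev_fst], metis ev_fst pfst_pe)
  then show ?case using Suc assms
    by (simp add: ev_recS ev_comp)
qed

lemma eval_ifP:
  assumes "eval g c x C" "eval g a x A" "eval g b x B"
  shows "eval g (ifP c a b) x (if C \<noteq> 0 then A else B)"
  unfolding ifP_def
  by (rule ev_comp[OF ev_pair[OF ev_id assms(1)]], rule eval_ifP_aux[OF assms(2,3)])

definition predP :: recf where
  "predP = Comp (Rec Zero (Comp Snd Fst)) (Pair Zero Ident)"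

lemma eval_predP_aux: "eval g (Rec Zero (Comp Snd Fst)) (pe 0 n) (n - 1)"
proof (induction n)
  case 0 then show ?case by (simp add: ev_rec0 ev_zero)
next
  case (Suc n)
  have "eval g (Comp Snd Fst) (pe (pe 0 n) (n - 1)) n"
    using ev_comp[OF ev_fst ev_snd, of g "pe (pe 0 n) (n - 1)"] by simp
  from ev_recS[OF Suc this] show ?case by simp
qed

lemma eval_predP: "eval g predP x (x - 1)"
  unfolding predP_def by (rule ev_comp[OF ev_pair[OF ev_zero ev_id] eval_predP_aux])

lemma eval_Rec_iter:
  assumes "\<And>z. eval g d z (F (psnd z))"
  shows "eval g (Rec Ident d) (pe a k) ((F ^^ k) a)"
proof (induction k)
  case 0 then show ?case by (simp add: ev_rec0 ev_id)
next
  case (Suc k)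
  then show ?case using assms[of "pe (pe a k) ((F ^^ k) a)"] by (simp add: ev_recS)
qed

definition subP where "subP = Rec Ident (Comp predP Snd)"
definition addP where "addP = Rec Ident (Comp Succ Snd)"
definition snditP where "snditP = Rec Ident (Comp Snd Snd)"

lemma pred_iter: "((\<lambda>z. z - Suc 0) ^^ k) a = a - k"
  by (induction k) auto
lemma suc_iter: "(Suc ^^ k) a = a + k"
  by (induction k) auto

lemma eval_subP: "eval g subP (pe a b) (a - b)"
proof -
  have "eval g subP (pe a b) (((\<lambda>z. z - 1) ^^ b) a)"
    unfolding subP_def by (rule eval_Rec_iter) (metis ev_comp ev_snd eval_predP)
  then show ?thesis by (simp add: pred_iter)
qed

lemma eval_addP: "eval g addP (pe a b) (a + b)"
proof -
  have "eval g addP (pe a b) ((Suc ^^ b) a)"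
    unfolding addP_def by (rule eval_Rec_iter) (metis ev_comp ev_snd ev_succ)
  then show ?thesis by (simp add: suc_iter add.commute)
qed

lemma eval_snditP: "eval g snditP (pe a b) (((\<lambda>z. psnd z) ^^ b) a)"
  unfolding snditP_def by (rule eval_Rec_iter) (metis ev_comp ev_snd)

datatype exp = Var | Cn nat | EFst exp | ESnd exp | Pr exp exp | Sc exp | Orc exp
  | If exp exp exp | Sub exp exp | Add exp exp | SndIt exp exp | All exp exp | Ap exp exp

fun sem :: "(nat \<Rightarrow> nat) \<Rightarrow> exp \<Rightarrow> nat \<Rightarrow> nat" where
  "sem g Var x = x"
| "sem g (Cn k) x = k"
| "sem g (EFst e) x = pfst (sem g e x)"
| "sem g (ESnd e) x = psnd (sem g e x)"
| "sem g (Pr a b) x = pe (sem g a x) (sem g b x)"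
| "sem g (Sc e) x = Suc (sem g e x)"
| "sem g (Orc e) x = g (sem g e x)"
| "sem g (If c a b) x = (if sem g c x \<noteq> 0 then sem g a x else sem g b x)"
| "sem g (Sub a b) x = sem g a x - sem g b x"
| "sem g (Add a b) x = sem g a x + sem g b x"
| "sem g (SndIt a n) x = ((\<lambda>z. psnd z) ^^ sem g n x) (sem g a x)"
| "sem g (All n b) x = (if \<forall>i\<le>sem g n x. sem g b (pe x i) \<noteq> 0 then 1 else 0)"
| "sem g (Ap a b) x = sem g a (sem g b x)"

fun compile :: "recf \<Rightarrow> exp \<Rightarrow> recf" where
  "compile Oc Var = Ident"
| "compile Oc (Cn k) = constP k"
| "compile Oc (EFst e) = Comp Fst (compile Oc e)"
| "compile Oc (ESnd e) = Comp Snd (compile Oc e)"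
| "compile Oc (Pr a b) = Pair (compile Oc a) (compile Oc b)"
| "compile Oc (Sc e) = Comp Succ (compile Oc e)"
| "compile Oc (Orc e) = Comp Oc (compile Oc e)"
| "compile Oc (If c a b) = ifP (compile Oc c) (compile Oc a) (compile Oc b)"
| "compile Oc (Sub a b) = Comp subP (Pair (compile Oc a) (compile Oc b))"
| "compile Oc (Add a b) = Comp addP (Pair (compile Oc a) (compile Oc b))"
| "compile Oc (SndIt a n) = Comp snditP (Pair (compile Oc a) (compile Oc n))"
| "compile Oc (All n b) = Comp (Rec
     (ifP (Comp (compile Oc b) (Pair Ident Zero)) (constP 1) Zero)
     (ifP Snd (ifP (Comp (compile Oc b) (Pair (Comp Fst Fst) (Comp Succ (Comp Snd Fst))))
                 (constP 1) Zero) Zero))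
     (Pair Ident (compile Oc n))"
| "compile Oc (Ap a b) = Comp (compile Oc a) (compile Oc b)"

lemma eval_All_aux:
  assumes B: "\<And>z. eval g cb z (sem gx b z)"
  shows "eval g (Rec
     (ifP (Comp cb (Pair Ident Zero)) (constP 1) Zero)
     (ifP Snd (ifP (Comp cb (Pair (Comp Fst Fst) (Comp Succ (Comp Snd Fst))))
                 (constP 1) Zero) Zero)) (pe x k)
     (if \<forall>i\<le>k. sem gx b (pe x i) \<noteq> 0 then 1 else 0)"
proof (induction k)
  case 0
  have "eval g (Comp cb (Pair Ident Zero)) x (sem gx b (pe x 0))"
    by (rule ev_comp[OF ev_pair[OF ev_id ev_zero] B])
  from ev_rec0[OF eval_ifP[OF this eval_constP[of g 1 x] ev_zero]]
  show ?case by (simp del: constP.simps)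
next
  case (Suc k)
  let ?p = "if \<forall>i\<le>k. sem gx b (pe x i) \<noteq> 0 then 1 else (0::nat)"
  let ?z = "pe (pe x k) ?p"
  have e1: "eval g (Pair (Comp Fst Fst) (Comp Succ (Comp Snd Fst))) ?z (pe x (Suc k))"
    using ev_pair[OF ev_comp[OF ev_fst ev_fst] ev_comp[OF ev_comp[OF ev_fst ev_snd] ev_succ], of g ?z] by simp
  have "eval g (Comp cb (Pair (Comp Fst Fst) (Comp Succ (Comp Snd Fst)))) ?z (sem gx b (pe x (Suc k)))"
    by (rule ev_comp[OF e1 B])
  from eval_ifP[OF this eval_constP ev_zero]
  have "eval g (ifP (Comp cb (Pair (Comp Fst Fst) (Comp Succ (Comp Snd Fst)))) (constP 1) Zero) ?z
         (if sem gx b (pe x (Suc k)) \<noteq> 0 then 1 else 0)" .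
  from eval_ifP[OF ev_snd this ev_zero]
  have "eval g (ifP Snd (ifP (Comp cb (Pair (Comp Fst Fst) (Comp Succ (Comp Snd Fst)))) (constP 1) Zero) Zero) ?z
     (if ?p \<noteq> 0 then (if sem gx b (pe x (Suc k)) \<noteq> 0 then 1 else 0) else 0)" by simp
  moreover have "(if ?p \<noteq> 0 then (if sem gx b (pe x (Suc k)) \<noteq> 0 then 1 else 0) else 0)
     = (if \<forall>i\<le>Suc k. sem gx b (pe x i) \<noteq> 0 then 1 else (0::nat))"
    by (auto simp: le_Suc_eq)
  ultimately have D: "eval g (ifP Snd (ifP (Comp cb (Pair (Comp Fst Fst) (Comp Succ (Comp Snd Fst)))) (constP 1) Zero) Zero) ?z
     (if \<forall>i\<le>Suc k. sem gx b (pe x i) \<noteq> 0 then 1 else (0::nat))" by simp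
  show ?case by (rule ev_recS[OF Suc.IH D])
qed

lemma compile_correct:
  assumes Oc: "\<And>z. eval g Oc z (gx z)"
  shows "eval g (compile Oc e) x (sem gx e x)"
proof (induction e arbitrary: x)
  case (If c a b) show ?case using eval_ifP[OF If(1)[of x] If(2)[of x] If(3)[of x]] by simp
next
  case (Sub a b) show ?case using ev_comp[OF ev_pair[OF Sub(1)[of x] Sub(2)[of x]] eval_subP] by simp
next
  case (Add a b) show ?case using ev_comp[OF ev_pair[OF Add(1)[of x] Add(2)[of x]] eval_addP] by simp
next
  case (SndIt a n) show ?case using ev_comp[OF ev_pair[OF SndIt(1)[of x] SndIt(2)[of x]] eval_snditP] by simp
next
  case (All n b)
  show ?case using ev_comp[OF ev_pair[OF ev_id All(1)[of x]] eval_All_aux[OF All(2)]] by simp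
next
  case Var show ?case by (simp add: ev_id)
next
  case (Cn k) show ?case by (simp add: eval_constP)
next
  case (EFst e) show ?case using ev_comp[OF EFst[of x] ev_fst] by simp
next
  case (ESnd e) show ?case using ev_comp[OF ESnd[of x] ev_snd] by simp
next
  case (Pr a b) show ?case using ev_pair[OF Pr(1)[of x] Pr(2)[of x]] by simp
next
  case (Sc e) show ?case using ev_comp[OF Sc[of x] ev_succ] by simp
next
  case (Orc e) show ?case using ev_comp[OF Orc[of x] Oc] by simp
next
  case (Ap a b) show ?case using ev_comp[OF Ap(2)[of x] Ap(1)] by simp
qed

lemma encode_inj: "encode p = encode q \<Longrightarrow> p = q"
proof (induction p arbitrary: q)
  case Zero then show ?case by (cases q) (auto simp: prod_encode_eq)
next
  case Succ then show ?case by (cases q) (auto simp: prod_encode_eq)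
next
  case Ident then show ?case by (cases q) (auto simp: prod_encode_eq)
next
  case Fst then show ?case by (cases q) (auto simp: prod_encode_eq)
next
  case Snd then show ?case by (cases q) (auto simp: prod_encode_eq)
next
  case Oracle then show ?case by (cases q) (auto simp: prod_encode_eq)
next
  case (Comp p1 p2) then show ?case by (cases q) (auto simp: prod_encode_eq)
next
  case (Pair p1 p2) then show ?case by (cases q) (auto simp: prod_encode_eq)
next
  case (Rec p1 p2) then show ?case by (cases q) (auto simp: prod_encode_eq)
next
  case (Mu p1) then show ?case by (cases q) (auto simp: prod_encode_eq)
qed

definition jt :: "nat \<Rightarrow> nat" where "jt J = pfst J"
definition jc :: "nat \<Rightarrow> nat" where "jc J = pfst (psnd J)"
definition jx :: "nat \<Rightarrow> nat" where "jx J = pfst (psnd (psnd J))"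
definition jy :: "nat \<Rightarrow> nat" where "jy J = psnd (psnd (psnd J))"
definition mkJ :: "nat \<Rightarrow> nat \<Rightarrow> nat \<Rightarrow> nat \<Rightarrow> nat" where
  "mkJ t c x y = pe t (pe c (pe x y))"

lemma mkJ_fields[simp]: "jt (mkJ t c x y) = t" "jc (mkJ t c x y) = c"
  "jx (mkJ t c x y) = x" "jy (mkJ t c x y) = y"
  by (simp_all add: jt_def jc_def jx_def jy_def mkJ_def)

definition jsem :: "(nat \<Rightarrow> nat) \<Rightarrow> nat \<Rightarrow> bool" where
  "jsem g J \<longleftrightarrow>
     (jt J = 0 \<and> (\<exists>p. encode p = jc J \<and> eval g p (jx J) (jy J))) \<or>
     (jt J = 1 \<and> (\<forall>i<jy J. \<exists>p z. encode p = jc J \<and> eval g p (pe (jx J) i) (Suc z))) \<or>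
     (jt J = 2 \<and> (\<exists>p. encode p = jc J))"

definition axiom :: "(nat \<Rightarrow> nat) \<Rightarrow> nat \<Rightarrow> bool" where
  "axiom g J \<longleftrightarrow>
     (jt J = 0 \<and> (jc J = pe 0 0 \<and> jy J = 0 \<or> jc J = pe 1 0 \<and> jy J = Suc (jx J)
       \<or> jc J = pe 2 0 \<and> jy J = jx J \<or> jc J = pe 3 0 \<and> jy J = pfst (jx J)
       \<or> jc J = pe 4 0 \<and> jy J = psnd (jx J) \<or> jc J = pe 5 0 \<and> jy J = g (jx J)))
     \<or> (jt J = 1 \<and> jy J = 0) \<or> (jt J = 2 \<and> pfst (jc J) \<le> 5 \<and> psnd (jc J) = 0)"

definition c1 :: "nat \<Rightarrow> nat" where "c1 c = pfst (psnd c)"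
definition c2 :: "nat \<Rightarrow> nat" where "c2 c = psnd (psnd c)"

definition rule :: "nat \<Rightarrow> nat \<Rightarrow> nat \<Rightarrow> bool" where
  "rule J P Q \<longleftrightarrow>
    (jt J = 0 \<and> pfst (jc J) = 6 \<and> jt P = 0 \<and> jc P = c2 (jc J) \<and> jx P = jx J
       \<and> jt Q = 0 \<and> jc Q = c1 (jc J) \<and> jx Q = jy P \<and> jy Q = jy J)
  \<or> (jt J = 0 \<and> pfst (jc J) = 7 \<and> jt P = 0 \<and> jc P = c1 (jc J) \<and> jx P = jx J
       \<and> jt Q = 0 \<and> jc Q = c2 (jc J) \<and> jx Q = jx J \<and> jy J = pe (jy P) (jy Q))
  \<or> (jt J = 0 \<and> pfst (jc J) = 8 \<and> psnd (jx J) = 0 \<and> jt P = 0 \<and> jc P = c1 (jc J)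
       \<and> jx P = pfst (jx J) \<and> jy P = jy J \<and> jt Q = 2 \<and> jc Q = c2 (jc J))
  \<or> (jt J = 0 \<and> pfst (jc J) = 8 \<and> psnd (jx J) \<noteq> 0 \<and> jt P = 0 \<and> jc P = jc J
       \<and> jx P = pe (pfst (jx J)) (psnd (jx J) - 1)
       \<and> jt Q = 0 \<and> jc Q = c2 (jc J) \<and> jx Q = pe (jx P) (jy P) \<and> jy Q = jy J)
  \<or> (jt J = 1 \<and> jy J \<noteq> 0 \<and> jt P = 1 \<and> jc P = jc J \<and> jx P = jx J \<and> jy P = jy J - 1
       \<and> jt Q = 0 \<and> jc Q = jc J \<and> jx Q = pe (jx J) (jy J - 1) \<and> jy Q \<noteq> 0)
  \<or> (jt J = 0 \<and> pfst (jc J) = 9 \<and> jt P = 1 \<and> jc P = psnd (jc J) \<and> jx P = jx J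
       \<and> jy P = jy J \<and> jt Q = 0 \<and> jc Q = psnd (jc J) \<and> jx Q = pe (jx J) (jy J)
       \<and> jy Q = 0)
  \<or> (jt J = 2 \<and> 6 \<le> pfst (jc J) \<and> pfst (jc J) \<le> 8 \<and> jt P = 2 \<and> jc P = c1 (jc J)
       \<and> jt Q = 2 \<and> jc Q = c2 (jc J))
  \<or> (jt J = 2 \<and> pfst (jc J) = 9 \<and> jt P = 2 \<and> jc P = psnd (jc J))"

lemma code_split2: "pfst c = k \<Longrightarrow> c = pe k (pe (c1 c) (c2 c))"
  by (metis c1_def c2_def pe_split)
lemma code_split1: "pfst c = k \<Longrightarrow> c = pe k (psnd c)"
  by (metis pe_split)

lemma encode_Rec_inv: "encode p = pe 8 (pe a b) \<Longrightarrow> \<exists>q1 q2. p = Rec q1 q2 \<and> encode q1 = a \<and> encode q2 = b"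
  by (cases p) (auto simp: prod_encode_eq)

lemma axiom_sound:
  assumes "axiom g J" shows "jsem g J"
  using assms unfolding axiom_def
proof (elim disjE conjE)
  assume "jt J = 0" "jc J = pe 0 0" "jy J = 0"
  then show ?thesis by (auto simp: jsem_def intro!: exI[of _ Zero] ev_zero)
next
  assume "jt J = 0" "jc J = pe 1 0" "jy J = Suc (jx J)"
  then show ?thesis by (auto simp: jsem_def intro!: exI[of _ Succ] ev_succ)
next
  assume "jt J = 0" "jc J = pe 2 0" "jy J = jx J"
  then show ?thesis by (auto simp: jsem_def intro!: exI[of _ Ident] ev_id)
next
  assume "jt J = 0" "jc J = pe 3 0" "jy J = pfst (jx J)"
  then show ?thesis by (auto simp: jsem_def intro!: exI[of _ Fst] ev_fst)
next
  assume "jt J = 0" "jc J = pe 4 0" "jy J = psnd (jx J)"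
  then show ?thesis by (auto simp: jsem_def intro!: exI[of _ Snd] ev_snd)
next
  assume "jt J = 0" "jc J = pe 5 0" "jy J = g (jx J)"
  then show ?thesis by (auto simp: jsem_def intro!: exI[of _ Oracle] ev_oracle)
next
  assume "jt J = 1" "jy J = 0"
  then show ?thesis by (simp add: jsem_def)
next
  assume h: "jt J = 2" "pfst (jc J) \<le> 5" "psnd (jc J) = 0"
  then have "jc J = pe (pfst (jc J)) 0" by (metis pe_split)
  moreover have "\<exists>p. encode p = pe k 0" if "k \<le> 5" for k
  proof -
    from that consider "k=0"|"k=1"|"k=2"|"k=3"|"k=4"|"k=5" by linarith
    then show ?thesis
    proof cases
      case 1 then show ?thesis by (intro exI[of _ Zero]) simp
    next
      case 2 then show ?thesis by (intro exI[of _ Succ]) simp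
    next
      case 3 then show ?thesis by (intro exI[of _ Ident]) simp
    next
      case 4 then show ?thesis by (intro exI[of _ Fst]) simp
    next
      case 5 then show ?thesis by (intro exI[of _ Snd]) simp
    next
      case 6 then show ?thesis by (intro exI[of _ Oracle]) simp
    qed
  qed
  ultimately have "\<exists>p. encode p = jc J" using h(2) by metis
  then show ?thesis using h by (simp add: jsem_def)
qed

lemma rule_sound:
  assumes r: "rule J P Q" and sP: "jsem g P" and sQ: "jsem g Q"
  shows "jsem g J"
  using r unfolding rule_def
proof (elim disjE conjE)
  assume h: "jt J = 0" "pfst (jc J) = 6" "jt P = 0" "jc P = c2 (jc J)" "jx P = jx J"
       "jt Q = 0" "jc Q = c1 (jc J)" "jx Q = jy P" "jy Q = jy J"
  from sP h obtain p2 where p2: "encode p2 = c2 (jc J)" "eval g p2 (jx J) (jy P)"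
    unfolding jsem_def by auto
  from sQ h obtain p1 where p1: "encode p1 = c1 (jc J)" "eval g p1 (jy P) (jy J)"
    unfolding jsem_def by auto
  have "encode (Comp p1 p2) = jc J" using code_split2[OF h(2)] p1 p2 by simp
  moreover have "eval g (Comp p1 p2) (jx J) (jy J)" by (rule ev_comp[OF p2(2) p1(2)])
  ultimately show ?thesis using h unfolding jsem_def by blast
next
  assume h: "jt J = 0" "pfst (jc J) = 7" "jt P = 0" "jc P = c1 (jc J)" "jx P = jx J"
       "jt Q = 0" "jc Q = c2 (jc J)" "jx Q = jx J" "jy J = pe (jy P) (jy Q)"
  from sP h obtain p1 where p1: "encode p1 = c1 (jc J)" "eval g p1 (jx J) (jy P)"
    unfolding jsem_def by auto
  from sQ h obtain p2 where p2: "encode p2 = c2 (jc J)" "eval g p2 (jx J) (jy Q)"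
    unfolding jsem_def by auto
  have "encode (Pair p1 p2) = jc J" using code_split2[OF h(2)] p1 p2 by simp
  moreover have "eval g (Pair p1 p2) (jx J) (jy J)" using ev_pair[OF p1(2) p2(2)] h by simp
  ultimately show ?thesis using h unfolding jsem_def by blast
next
  assume h: "jt J = 0" "pfst (jc J) = 8" "psnd (jx J) = 0" "jt P = 0" "jc P = c1 (jc J)"
       "jx P = pfst (jx J)" "jy P = jy J" "jt Q = 2" "jc Q = c2 (jc J)"
  from sP h obtain p1 where p1: "encode p1 = c1 (jc J)" "eval g p1 (pfst (jx J)) (jy J)"
    unfolding jsem_def by auto
  from sQ h obtain p2 where p2: "encode p2 = c2 (jc J)"
    unfolding jsem_def by auto
  have "encode (Rec p1 p2) = jc J" using code_split2[OF h(2)] p1 p2 by simp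
  moreover have "eval g (Rec p1 p2) (jx J) (jy J)"
    using ev_rec0[OF p1(2), of p2] pe_split[of "jx J"] h(3) by simp
  ultimately show ?thesis using h unfolding jsem_def by blast
next
  assume h: "jt J = 0" "pfst (jc J) = 8" "psnd (jx J) \<noteq> 0" "jt P = 0" "jc P = jc J"
       "jx P = pe (pfst (jx J)) (psnd (jx J) - 1)"
       "jt Q = 0" "jc Q = c2 (jc J)" "jx Q = pe (jx P) (jy P)" "jy Q = jy J"
  from sP h obtain p where p: "encode p = jc J" "eval g p (jx P) (jy P)"
    unfolding jsem_def by auto
  from sQ h obtain p2 where p2: "encode p2 = c2 (jc J)" "eval g p2 (jx Q) (jy J)"
    unfolding jsem_def by auto
  have "encode p = pe 8 (pe (c1 (jc J)) (c2 (jc J)))" using p(1) code_split2[OF h(2)] by simp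
  from encode_Rec_inv[OF this] obtain q1 q2 where q: "p = Rec q1 q2" "encode q2 = c2 (jc J)"
    by blast
  have "q2 = p2" using q(2) p2(1) encode_inj by simp
  then have "eval g p (pe (pfst (jx J)) (Suc (psnd (jx J) - 1))) (jy J)"
    using ev_recS[of g q1 q2 "pfst (jx J)" "psnd (jx J) - 1" "jy P" "jy J"] p(2) p2(2) q(1) h by simp
  moreover have "pe (pfst (jx J)) (Suc (psnd (jx J) - 1)) = jx J"
    using h(3) pe_split[of "jx J"] by simp
  ultimately show ?thesis using h p(1) unfolding jsem_def by auto
next
  assume h: "jt J = 1" "jy J \<noteq> 0" "jt P = 1" "jc P = jc J" "jx P = jx J" "jy P = jy J - 1"
       "jt Q = 0" "jc Q = jc J" "jx Q = pe (jx J) (jy J - 1)" "jy Q \<noteq> 0"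
  from sP h have A: "\<forall>i<jy J - 1. \<exists>p z. encode p = jc J \<and> eval g p (pe (jx J) i) (Suc z)"
    unfolding jsem_def by auto
  from sQ h obtain p where p: "encode p = jc J" "eval g p (pe (jx J) (jy J - 1)) (Suc (jy Q - 1))"
    unfolding jsem_def by auto
  have "\<forall>i<jy J. \<exists>p z. encode p = jc J \<and> eval g p (pe (jx J) i) (Suc z)"
  proof (intro allI impI)
    fix i assume "i < jy J"
    then consider "i < jy J - 1" | "i = jy J - 1" by linarith
    then show "\<exists>p z. encode p = jc J \<and> eval g p (pe (jx J) i) (Suc z)"
      using A p by cases auto
  qed
  then show ?thesis using h unfolding jsem_def by auto
next
  assume h: "jt J = 0" "pfst (jc J) = 9" "jt P = 1" "jc P = psnd (jc J)" "jx P = jx J"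
       "jy P = jy J" "jt Q = 0" "jc Q = psnd (jc J)" "jx Q = pe (jx J) (jy J)" "jy Q = 0"
  from sP h have A: "\<forall>i<jy J. \<exists>p z. encode p = psnd (jc J) \<and> eval g p (pe (jx J) i) (Suc z)"
    unfolding jsem_def by auto
  from sQ h obtain p where p: "encode p = psnd (jc J)" "eval g p (pe (jx J) (jy J)) 0"
    unfolding jsem_def by auto
  have "\<forall>i<jy J. \<exists>z. eval g p (pe (jx J) i) (Suc z)"
    using A p(1) encode_inj by metis
  from ev_mu[OF p(2) this] have "eval g (Mu p) (jx J) (jy J)" .
  moreover have "encode (Mu p) = jc J" using p(1) code_split1[OF h(2)] by simp
  ultimately show ?thesis using h unfolding jsem_def by blast
next
  assume h: "jt J = 2" "6 \<le> pfst (jc J)" "pfst (jc J) \<le> 8" "jt P = 2" "jc P = c1 (jc J)"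
      "jt Q = 2" "jc Q = c2 (jc J)"
  from sP h obtain p1 where p1: "encode p1 = c1 (jc J)" unfolding jsem_def by auto
  from sQ h obtain p2 where p2: "encode p2 = c2 (jc J)" unfolding jsem_def by auto
  from h(2,3) consider "pfst (jc J) = 6" | "pfst (jc J) = 7" | "pfst (jc J) = 8" by linarith
  then have "\<exists>p. encode p = jc J"
  proof cases
    case 1 then show ?thesis using code_split2[OF 1] p1 p2 by (intro exI[of _ "Comp p1 p2"]) simp
  next
    case 2 then show ?thesis using code_split2[OF 2] p1 p2 by (intro exI[of _ "Pair p1 p2"]) simp
  next
    case 3 then show ?thesis using code_split2[OF 3] p1 p2 by (intro exI[of _ "Rec p1 p2"]) simp
  qed
  then show ?thesis using h unfolding jsem_def by simp
next
  assume h: "jt J = 2" "pfst (jc J) = 9" "jt P = 2" "jc P = psnd (jc J)"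
  from sP h obtain p1 where p1: "encode p1 = psnd (jc J)" unfolding jsem_def by auto
  have "encode (Mu p1) = jc J" using p1 code_split1[OF h(2)] by simp
  then show ?thesis using h unfolding jsem_def by blast
qed

definition validF :: "(nat \<Rightarrow> nat) \<Rightarrow> (nat \<Rightarrow> nat) \<Rightarrow> (nat \<Rightarrow> nat) \<Rightarrow> (nat \<Rightarrow> nat) \<Rightarrow> nat \<Rightarrow> bool" where
  "validF g Jf jf kf len \<longleftrightarrow> (\<forall>i\<le>len. axiom g (Jf i) \<or>
      (jf i < i \<and> kf i < i \<and> rule (Jf i) (Jf (jf i)) (Jf (kf i))))"

lemma validF_sound:
  assumes "validF g Jf jf kf len"
  shows "i \<le> len \<Longrightarrow> jsem g (Jf i)"
proof (induction i rule: less_induct)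
  case (less i)
  from assms less.prems have "axiom g (Jf i) \<or>
      (jf i < i \<and> kf i < i \<and> rule (Jf i) (Jf (jf i)) (Jf (kf i)))"
    unfolding validF_def by blast
  then show ?case
  proof
    assume "axiom g (Jf i)" then show ?thesis by (rule axiom_sound)
  next
    assume h: "jf i < i \<and> kf i < i \<and> rule (Jf i) (Jf (jf i)) (Jf (kf i))"
    then have "jsem g (Jf (jf i))" "jsem g (Jf (kf i))" using less by auto
    then show ?thesis using h rule_sound by blast
  qed
qed

type_synonym entry = "nat \<times> nat \<times> nat"

definition okL :: "(nat \<Rightarrow> nat) \<Rightarrow> entry list \<Rightarrow> nat \<Rightarrow> bool" where
  "okL g L i \<longleftrightarrow> axiom g (fst (L!i)) \<or> (fst (snd (L!i)) < i \<and> snd (snd (L!i)) < i \<and>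
     rule (fst (L!i)) (fst (L!fst (snd (L!i)))) (fst (L!snd (snd (L!i)))))"

definition validL :: "(nat \<Rightarrow> nat) \<Rightarrow> entry list \<Rightarrow> bool" where
  "validL g L \<longleftrightarrow> (\<forall>i<length L. okL g L i)"

definition shift :: "nat \<Rightarrow> entry list \<Rightarrow> entry list" where
  "shift n L = map (\<lambda>(J,j,k). (J, j+n, k+n)) L"

lemma validL_append:
  assumes A: "validL g A" and B: "validL g B"
  shows "validL g (A @ shift (length A) B)"
  unfolding validL_def
proof (intro allI impI)
  fix i assume i: "i < length (A @ shift (length A) B)"
  show "okL g (A @ shift (length A) B) i"
  proof (cases "i < length A")
    case True
    with A have "okL g A i" unfolding validL_def by blast
    then show ?thesis using True unfolding okL_def by (auto simp: nth_append)
  next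
    case False
    define i' where "i' = i - length A"
    have i': "i' < length B" "i = i' + length A" using i False by (auto simp: i'_def shift_def)
    with B have ok: "okL g B i'" unfolding validL_def by blast
    obtain J j k where e: "B!i' = (J,j,k)" by (cases "B!i'") auto
    have n: "(A @ shift (length A) B) ! i = (J, j + length A, k + length A)"
      using i' e by (simp add: nth_append shift_def)
    show ?thesis
    proof (cases "axiom g J")
      case True then show ?thesis unfolding okL_def using n by simp
    next
      case False
      with ok e have h: "j < i'" "k < i'" "rule J (fst (B!j)) (fst (B!k))"
        unfolding okL_def by auto
      have "(A @ shift (length A) B) ! (j + length A) = shift (length A) B ! j"
        by (simp add: nth_append)
      moreover have "(A @ shift (length A) B) ! (k + length A) = shift (length A) B ! k"
        by (simp add: nth_append)
      ultimately show ?thesis unfolding okL_def using n h i'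
        by (auto simp: shift_def split: prod.splits)
    qed
  qed
qed

lemma validL_snoc:
  assumes L: "validL g L"
    and r: "axiom g J \<or> (j < length L \<and> k < length L \<and> rule J (fst (L!j)) (fst (L!k)))"
  shows "validL g (L @ [(J,j,k)])"
  unfolding validL_def
proof (intro allI impI)
  fix i assume i: "i < length (L @ [(J,j,k)])"
  show "okL g (L @ [(J,j,k)]) i"
  proof (cases "i < length L")
    case True
    with L have "okL g L i" unfolding validL_def by blast
    then show ?thesis using True unfolding okL_def by (auto simp: nth_append)
  next
    case False
    then have "i = length L" using i by simp
    then show ?thesis using r unfolding okL_def by (auto simp: nth_append)
  qed
qed

definition derivable :: "(nat \<Rightarrow> nat) \<Rightarrow> nat \<Rightarrow> bool" where
  "derivable g J \<longleftrightarrow> (\<exists>L. validL g L \<and> (\<exists>i<length L. fst (L!i) = J))"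

lemma derivable_axiom: "axiom g J \<Longrightarrow> derivable g J"
  unfolding derivable_def
  by (rule exI[of _ "[(J,0,0)]"]) (auto simp: validL_def okL_def)

lemma derivable_rule:
  assumes P: "derivable g P" and Q: "derivable g Q" and r: "rule J P Q"
  shows "derivable g J"
proof -
  from P obtain A iP where A: "validL g A" "iP < length A" "fst (A!iP) = P"
    unfolding derivable_def by blast
  from Q obtain B iQ where B: "validL g B" "iQ < length B" "fst (B!iQ) = Q"
    unfolding derivable_def by blast
  let ?C = "A @ shift (length A) B"
  have C: "validL g ?C" by (rule validL_append[OF A(1) B(1)])
  have cP: "fst (?C ! iP) = P" using A by (simp add: nth_append)
  obtain JQ jQ kQ where eQ: "B!iQ = (JQ,jQ,kQ)" by (cases "B!iQ") auto
  have "?C ! (iQ + length A) = shift (length A) B ! iQ" by (simp add: nth_append)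
  also have "\<dots> = (JQ, jQ + length A, kQ + length A)" using eQ B(2) by (simp add: shift_def)
  finally have cQ: "fst (?C ! (iQ + length A)) = Q" using B(3) eQ by simp
  have len: "iP < length ?C" "iQ + length A < length ?C" using A(2) B(2) by (simp_all add: shift_def)
  have rr: "rule J (fst (?C!iP)) (fst (?C!(iQ + length A)))" using r cP cQ by simp
  have V: "validL g (?C @ [(J, iP, iQ + length A)])"
    using validL_snoc[OF C disjI2[OF conjI[OF len(1) conjI[OF len(2) rr]]]] .
  have "fst ((?C @ [(J, iP, iQ + length A)]) ! length ?C) = J" by (simp only: nth_append_length fst_conv)
  moreover have "length ?C < length (?C @ [(J, iP, iQ + length A)])" by simp
  ultimately show ?thesis unfolding derivable_def using V by blast
qed

lemma c12_pe[simp]: "c1 (pe t (pe a b)) = a" "c2 (pe t (pe a b)) = b"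
  by (simp_all add: c1_def c2_def)

lemma derivable_code: "derivable g (mkJ 2 (encode p) 0 0)"
proof (induction p)
  case (Comp p1 p2)
  show ?case by (rule derivable_rule[OF Comp(1) Comp(2)]) (simp add: rule_def)
next
  case (Pair p1 p2)
  show ?case by (rule derivable_rule[OF Pair(1) Pair(2)]) (simp add: rule_def)
next
  case (Rec p1 p2)
  show ?case by (rule derivable_rule[OF Rec(1) Rec(2)]) (simp add: rule_def)
next
  case (Mu p1)
  show ?case by (rule derivable_rule[OF Mu Mu]) (simp add: rule_def)
qed (rule derivable_axiom, simp add: axiom_def)+

lemma derivable_M:
  assumes "\<forall>i<n. \<exists>y. derivable g (mkJ 0 c (pe x i) (Suc y))"
  shows "derivable g (mkJ 1 c x n)"
  using assms
proof (induction n)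
  case 0 then show ?case by (intro derivable_axiom) (simp add: axiom_def)
next
  case (Suc n)
  then obtain y where y: "derivable g (mkJ 0 c (pe x n) (Suc y))" by blast
  from Suc have "derivable g (mkJ 1 c x n)" by simp
  from derivable_rule[OF this y] show ?case by (simp add: rule_def)
qed

lemma completeness: "eval g p x y \<Longrightarrow> derivable g (mkJ 0 (encode p) x y)"
proof (induction rule: eval.induct)
  case (ev_comp d x y c z)
  from derivable_rule[OF ev_comp.IH(1) ev_comp.IH(2)] show ?case by (simp add: rule_def)
next
  case (ev_pair c x y d z)
  from derivable_rule[OF ev_pair.IH(1) ev_pair.IH(2)] show ?case by (simp add: rule_def)
next
  case (ev_rec0 c a y d)
  from derivable_rule[OF ev_rec0.IH derivable_code[of g d]] show ?case by (simp add: rule_def)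
next
  case (ev_recS c d a n y z)
  from derivable_rule[OF ev_recS.IH(1) ev_recS.IH(2)] show ?case by (simp add: rule_def)
next
  case (ev_mu c x n)
  have "derivable g (mkJ 1 (encode c) x n)"
    using ev_mu.IH(2) by (intro derivable_M) blast
  from derivable_rule[OF this ev_mu.IH(1)] show ?case by (simp add: rule_def)
qed (rule derivable_axiom, simp add: axiom_def)+


fun codeL :: "entry list \<Rightarrow> nat" where
  "codeL [] = 0"
| "codeL ((J,j,k)#L) = pe (pe J (pe j k)) (codeL L)"

lemma iter_codeL: "i \<le> length L \<Longrightarrow> (psnd ^^ i) (codeL L) = codeL (drop i L)"
proof (induction i)
  case 0 then show ?case by simp
next
  case (Suc i)
  then have IH: "(psnd ^^ i) (codeL L) = codeL (drop i L)" and i: "i < length L" by auto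
  obtain J j k where e: "L!i = (J,j,k)" by (cases "L!i") auto
  have "drop i L = (J,j,k) # drop (Suc i) L" using Cons_nth_drop_Suc[OF i] e by simp
  then show ?case using IH by simp
qed

definition entryN :: "nat \<Rightarrow> nat \<Rightarrow> nat" where "entryN l i = pfst ((psnd ^^ i) l)"
definition JN :: "nat \<Rightarrow> nat \<Rightarrow> nat" where "JN l i = pfst (entryN l i)"
definition jN :: "nat \<Rightarrow> nat \<Rightarrow> nat" where "jN l i = pfst (psnd (entryN l i))"
definition kN :: "nat \<Rightarrow> nat \<Rightarrow> nat" where "kN l i = psnd (psnd (entryN l i))"

lemma entryN_codeL:
  assumes "i < length L"
  shows "JN (codeL L) i = fst (L!i)" "jN (codeL L) i = fst (snd (L!i))" "kN (codeL L) i = snd (snd (L!i))"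
proof -
  obtain J j k where e: "L!i = (J,j,k)" by (cases "L!i") auto
  have "drop i L = (J,j,k) # drop (Suc i) L" using Cons_nth_drop_Suc[OF assms] e by simp
  then have "entryN (codeL L) i = pe J (pe j k)"
    unfolding entryN_def using iter_codeL[of i L] assms by simp
  then show "JN (codeL L) i = fst (L!i)" "jN (codeL L) i = fst (snd (L!i))" "kN (codeL L) i = snd (snd (L!i))"
    using e by (simp_all add: JN_def jN_def kN_def)
qed

definition vnum :: "(nat \<Rightarrow> nat) \<Rightarrow> nat \<Rightarrow> nat \<Rightarrow> bool" where
  "vnum g e w \<longleftrightarrow> validF g (JN (psnd w)) (jN (psnd w)) (kN (psnd w)) (pfst w)
     \<and> jt (JN (psnd w) (pfst w)) = 0 \<and> jc (JN (psnd w) (pfst w)) = e \<and> jx (JN (psnd w) (pfst w)) = e"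

lemma vnum_iff: "(\<exists>w. vnum g e w) \<longleftrightarrow> (\<exists>y. Phi g e e y)"
proof
  assume "\<exists>w. vnum g e w"
  then obtain w where w: "vnum g e w" by blast
  let ?J = "JN (psnd w) (pfst w)"
  have "jsem g ?J" using w validF_sound[of g "JN (psnd w)" "jN (psnd w)" "kN (psnd w)" "pfst w" "pfst w"]
    unfolding vnum_def by simp
  then obtain p where "encode p = e" "eval g p e (jy ?J)" using w unfolding vnum_def jsem_def by auto
  then show "\<exists>y. Phi g e e y" unfolding Phi_def by blast
next
  assume "\<exists>y. Phi g e e y"
  then obtain p y where p: "encode p = e" "eval g p e y" unfolding Phi_def by blast
  from completeness[OF p(2)] p(1) have "derivable g (mkJ 0 e e y)" by simp
  then obtain L i where L: "validL g L" "i < length L" "fst (L!i) = mkJ 0 e e y"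
    unfolding derivable_def by blast
  let ?w = "pe i (codeL L)"
  have "validF g (JN (codeL L)) (jN (codeL L)) (kN (codeL L)) i"
    unfolding validF_def
  proof (intro allI impI)
    fix i' assume "i' \<le> i"
    then have i': "i' < length L" using L(2) by simp
    then have "okL g L i'" using L(1) unfolding validL_def by blast
    moreover have "fst (snd (L!i')) < i' \<Longrightarrow> fst (snd (L!i')) < length L" using i' by simp
    moreover have "snd (snd (L!i')) < i' \<Longrightarrow> snd (snd (L!i')) < length L" using i' by simp
    ultimately show "axiom g (JN (codeL L) i') \<or>
         jN (codeL L) i' < i' \<and> kN (codeL L) i' < i' \<and>
         rule (JN (codeL L) i') (JN (codeL L) (jN (codeL L) i')) (JN (codeL L) (kN (codeL L) i'))"
      unfolding okL_def using entryN_codeL[OF i'] entryN_codeL by metis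
  qed
  then have "vnum g e ?w" unfolding vnum_def using entryN_codeL[OF L(2)] L(3) by simp
  then show "\<exists>w. vnum g e w" by blast
qed

definition tv :: "bool \<Rightarrow> nat" where "tv b = (if b then 1 else 0)"
lemma tv_ne0[simp]: "(tv b \<noteq> 0) = b" by (simp add: tv_def)
lemma tv_gt0[simp]: "(0 < tv b) = b" by (simp add: tv_def)
lemma tv_eq0[simp]: "(tv b = 0) = (\<not> b)" by (simp add: tv_def)

definition eAnd where "eAnd a b = If a (If b (Cn 1) (Cn 0)) (Cn 0)"
definition eOr where "eOr a b = If a (Cn 1) (If b (Cn 1) (Cn 0))"
definition eNot where "eNot a = If a (Cn 0) (Cn 1)"
definition eEq where "eEq a b = If (Sub a b) (Cn 0) (If (Sub b a) (Cn 0) (Cn 1))"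
definition eLt where "eLt a b = If (Sub b a) (Cn 1) (Cn 0)"

lemma sem_bool[simp]:
  "sem g (eAnd a b) x = tv (sem g a x \<noteq> 0 \<and> sem g b x \<noteq> 0)"
  "sem g (eOr a b) x = tv (sem g a x \<noteq> 0 \<or> sem g b x \<noteq> 0)"
  "sem g (eNot a) x = tv (sem g a x = 0)"
  "sem g (eEq a b) x = tv (sem g a x = sem g b x)"
  "sem g (eLt a b) x = tv (sem g a x < sem g b x)"
  by (auto simp: eAnd_def eOr_def eNot_def eEq_def eLt_def tv_def)

fun eAnds :: "exp list \<Rightarrow> exp" where
  "eAnds [] = Cn 1"
| "eAnds (a # as) = eAnd a (eAnds as)"

fun eOrs :: "exp list \<Rightarrow> exp" where
  "eOrs [] = Cn 0"
| "eOrs (a # as) = eOr a (eOrs as)"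

declare eAnds.simps[simp del] eOrs.simps[simp del]

lemma sem_eAnds[simp]: "sem g (eAnds es) x = tv (list_all (\<lambda>e. sem g e x \<noteq> 0) es)"
  by (induction es) (auto simp: tv_def eAnds.simps)
lemma sem_eOrs[simp]: "sem g (eOrs es) x = tv (list_ex (\<lambda>e. sem g e x \<noteq> 0) es)"
  by (induction es) (auto simp: tv_def eOrs.simps)

definition "fT a = EFst a"
definition "fC a = EFst (ESnd a)"
definition "fX a = EFst (ESnd (ESnd a))"
definition "fY a = ESnd (ESnd (ESnd a))"

lemma sem_fields[simp]:
  "sem g (fT a) x = jt (sem g a x)" "sem g (fC a) x = jc (sem g a x)"
  "sem g (fX a) x = jx (sem g a x)" "sem g (fY a) x = jy (sem g a x)"
  by (simp_all add: fT_def fC_def fX_def fY_def jt_def jc_def jx_def jy_def)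

definition axiomE :: "exp \<Rightarrow> exp" where
  "axiomE J = eOrs [
     eAnds [eEq (fT J) (Cn 0), eOrs [
        eAnds [eEq (fC J) (Cn (pe 0 0)), eEq (fY J) (Cn 0)],
        eAnds [eEq (fC J) (Cn (pe 1 0)), eEq (fY J) (Sc (fX J))],
        eAnds [eEq (fC J) (Cn (pe 2 0)), eEq (fY J) (fX J)],
        eAnds [eEq (fC J) (Cn (pe 3 0)), eEq (fY J) (EFst (fX J))],
        eAnds [eEq (fC J) (Cn (pe 4 0)), eEq (fY J) (ESnd (fX J))],
        eAnds [eEq (fC J) (Cn (pe 5 0)), eEq (fY J) (Orc (fX J))]]],
     eAnds [eEq (fT J) (Cn 1), eEq (fY J) (Cn 0)],
     eAnds [eEq (fT J) (Cn 2), eNot (eLt (Cn 5) (EFst (fC J))), eEq (ESnd (fC J)) (Cn 0)]]"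

lemma sem_axiomE[simp]: "sem g (axiomE J) x = tv (axiom g (sem g J x))"
  unfolding axiomE_def axiom_def by (simp add: not_less)

definition ruleE :: "exp \<Rightarrow> exp \<Rightarrow> exp \<Rightarrow> exp" where
  "ruleE J P Q = eOrs [
    eAnds [eEq (fT J) (Cn 0), eEq (EFst (fC J)) (Cn 6), eEq (fT P) (Cn 0),
           eEq (fC P) (ESnd (ESnd (fC J))), eEq (fX P) (fX J),
           eEq (fT Q) (Cn 0), eEq (fC Q) (EFst (ESnd (fC J))), eEq (fX Q) (fY P), eEq (fY Q) (fY J)],
    eAnds [eEq (fT J) (Cn 0), eEq (EFst (fC J)) (Cn 7), eEq (fT P) (Cn 0),
           eEq (fC P) (EFst (ESnd (fC J))), eEq (fX P) (fX J),
           eEq (fT Q) (Cn 0), eEq (fC Q) (ESnd (ESnd (fC J))), eEq (fX Q) (fX J),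
           eEq (fY J) (Pr (fY P) (fY Q))],
    eAnds [eEq (fT J) (Cn 0), eEq (EFst (fC J)) (Cn 8), eEq (ESnd (fX J)) (Cn 0),
           eEq (fT P) (Cn 0), eEq (fC P) (EFst (ESnd (fC J))),
           eEq (fX P) (EFst (fX J)), eEq (fY P) (fY J), eEq (fT Q) (Cn 2),
           eEq (fC Q) (ESnd (ESnd (fC J)))],
    eAnds [eEq (fT J) (Cn 0), eEq (EFst (fC J)) (Cn 8), eNot (eEq (ESnd (fX J)) (Cn 0)),
           eEq (fT P) (Cn 0), eEq (fC P) (fC J),
           eEq (fX P) (Pr (EFst (fX J)) (Sub (ESnd (fX J)) (Cn 1))),
           eEq (fT Q) (Cn 0), eEq (fC Q) (ESnd (ESnd (fC J))), eEq (fX Q) (Pr (fX P) (fY P)),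
           eEq (fY Q) (fY J)],
    eAnds [eEq (fT J) (Cn 1), eNot (eEq (fY J) (Cn 0)), eEq (fT P) (Cn 1), eEq (fC P) (fC J),
           eEq (fX P) (fX J), eEq (fY P) (Sub (fY J) (Cn 1)),
           eEq (fT Q) (Cn 0), eEq (fC Q) (fC J), eEq (fX Q) (Pr (fX J) (Sub (fY J) (Cn 1))),
           eNot (eEq (fY Q) (Cn 0))],
    eAnds [eEq (fT J) (Cn 0), eEq (EFst (fC J)) (Cn 9), eEq (fT P) (Cn 1),
           eEq (fC P) (ESnd (fC J)), eEq (fX P) (fX J), eEq (fY P) (fY J),
           eEq (fT Q) (Cn 0), eEq (fC Q) (ESnd (fC J)), eEq (fX Q) (Pr (fX J) (fY J)),
           eEq (fY Q) (Cn 0)],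
    eAnds [eEq (fT J) (Cn 2), eNot (eLt (EFst (fC J)) (Cn 6)), eNot (eLt (Cn 8) (EFst (fC J))),
           eEq (fT P) (Cn 2), eEq (fC P) (EFst (ESnd (fC J))),
           eEq (fT Q) (Cn 2), eEq (fC Q) (ESnd (ESnd (fC J)))],
    eAnds [eEq (fT J) (Cn 2), eEq (EFst (fC J)) (Cn 9), eEq (fT P) (Cn 2),
           eEq (fC P) (ESnd (fC J))]]"

lemma sem_ruleE[simp]: "sem g (ruleE J P Q) x = tv (rule (sem g J x) (sem g P x) (sem g Q x))"
  unfolding ruleE_def rule_def c1_def c2_def by (simp add: not_less)

definition "X0 = EFst Var"
definition "IE = ESnd Var"
definition "entE n = EFst (SndIt (ESnd (ESnd X0)) n)"
definition "JE n = EFst (entE n)"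
definition "jE n = EFst (ESnd (entE n))"
definition "kE n = ESnd (ESnd (entE n))"

definition okE :: exp where
  "okE = eOr (axiomE (JE IE)) (eAnds [eLt (jE IE) IE, eLt (kE IE) IE, ruleE (JE IE) (JE (jE IE)) (JE (kE IE))])"

definition checker :: exp where
  "checker = (let JL = EFst (EFst (SndIt (ESnd (ESnd Var)) (EFst (ESnd Var)))) in
    eAnds [All (EFst (ESnd Var)) okE, eEq (fT JL) (Cn 0), eEq (fC JL) (EFst Var), eEq (fX JL) (EFst Var)])"

lemma sem_JE: "sem g (JE n) x = JN (psnd (psnd (pfst x))) (sem g n x)"
  "sem g (jE n) x = jN (psnd (psnd (pfst x))) (sem g n x)"
  "sem g (kE n) x = kN (psnd (psnd (pfst x))) (sem g n x)"
  by (simp_all add: JE_def jE_def kE_def entE_def X0_def JN_def jN_def kN_def entryN_def)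

lemma sem_All_tv: "sem g (All n b) x = tv (\<forall>i\<le>sem g n x. sem g b (pe x i) \<noteq> 0)"
  by (simp add: tv_def)

lemma sem_checker: "sem g checker (pe e w) = tv (vnum g e w)"
  unfolding checker_def okE_def vnum_def validF_def
  by (simp del: sem.simps(12) add: sem_All_tv Let_def sem_JE IE_def JN_def jN_def kN_def entryN_def)

definition PSprog :: recf where "PSprog = Comp Succ (Comp Oracle (constP 1))"
definition Sf :: "nat \<Rightarrow> nat" where "Sf = (\<lambda>n. if n = 0 then encode PSprog else 0)"
definition ce :: "nat \<Rightarrow> nat \<Rightarrow> nat" where "ce e = (\<lambda>n. e)"
definition OcH :: recf where "OcH = compile Oracle (Orc (Sc (Sc (Add Var Var))))"
definition Pprog :: recf where
  "Pprog = Comp (compile OcH checker) (Pair (Comp Oracle (constP 1)) Ident)"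
definition Hf :: "nat set \<Rightarrow> nat \<Rightarrow> nat" where
  "Hf X = (\<lambda>n. if n = 0 then encode Pprog else chi X (n - 1))"
definition hf :: "nat set \<Rightarrow> nat \<Rightarrow> nat \<Rightarrow> nat" where
  "hf X e = (\<lambda>n. sem (chi X) checker (pe e n))"
definition zf :: "nat \<Rightarrow> nat" where "zf = (\<lambda>n. 0)"

lemma join_1: "join g h 1 = h 0" "join g h (Suc 0) = h 0" by (simp_all add: join_def)
lemma join_ev: "join g h (Suc (Suc (z + z))) = g (Suc z)"
proof -
  have "Suc (Suc (z + z)) = 2 * Suc z" by simp
  then show ?thesis unfolding join_def by simp
qed

lemma comp_inI: "(\<And>n. eval (chi X) p n (g n)) \<Longrightarrow> computable_in X g"
  unfolding computable_in_def Phi_def by blast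

lemma eval_OcH: "eval (join (Hf X) c) OcH z (chi X z)"
proof -
  have "eval (join (Hf X) c) OcH z (sem (join (Hf X) c) (Orc (Sc (Sc (Add Var Var)))) z)"
    unfolding OcH_def by (rule compile_correct) (rule ev_oracle)
  then show ?thesis by (simp add: join_ev Hf_def)
qed

lemma eval_Pprog: "eval (join (Hf X) (ce e)) Pprog n (hf X e n)"
proof -
  have a: "eval (join (Hf X) (ce e)) (Pair (Comp Oracle (constP 1)) Ident) n (pe e n)"
    using ev_pair[OF ev_comp[OF eval_constP ev_oracle] ev_id, of "join (Hf X) (ce e)" 1 n]
    by (simp add: join_1 ce_def)
  have b: "eval (join (Hf X) (ce e)) (compile OcH checker) (pe e n) (sem (chi X) checker (pe e n))"
    by (rule compile_correct) (rule eval_OcH)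
  show ?thesis unfolding Pprog_def hf_def by (rule ev_comp[OF a b])
qed

lemma carrier_ce: "ce e \<in> K2_carrier X"
  unfolding K2_carrier_def ce_def by (auto intro!: comp_inI eval_constP)

lemma carrier_zf: "zf \<in> K2_carrier X"
  unfolding K2_carrier_def zf_def by (auto intro!: comp_inI ev_zero)

lemma carrier_Sf: "Sf \<in> K2_carrier X"
proof -
  have "eval (chi X) (ifP Ident (constP 0) (constP (encode PSprog))) n (Sf n)" for n
  proof -
    have "eval (chi X) (ifP Ident (constP 0) (constP (encode PSprog))) n (if n \<noteq> 0 then 0 else encode PSprog)"
      by (rule eval_ifP[OF ev_id eval_constP eval_constP])
    moreover have eq: "Sf n = (if n \<noteq> 0 then 0 else encode PSprog)" by (simp add: Sf_def)
    ultimately show ?thesis by (simp only: eq)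
  qed
  then show ?thesis unfolding K2_carrier_def by (auto intro!: comp_inI)
qed

lemma carrier_Hf: "Hf X \<in> K2_carrier X"
proof -
  have "eval (chi X) (ifP Ident (Comp Oracle predP) (constP (encode Pprog))) n (Hf X n)" for n
  proof -
    have "eval (chi X) (ifP Ident (Comp Oracle predP) (constP (encode Pprog))) n
       (if n \<noteq> 0 then chi X (n - 1) else encode Pprog)"
      by (rule eval_ifP[OF ev_id ev_comp[OF eval_predP ev_oracle] eval_constP])
    moreover have eq: "Hf X n = (if n \<noteq> 0 then chi X (n - 1) else encode Pprog)" by (simp add: Hf_def)
    ultimately show ?thesis by (simp only: eq)
  qed
  then show ?thesis unfolding K2_carrier_def by (auto intro!: comp_inI)
qed

lemma carrier_hf: "hf X e \<in> K2_carrier X"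
proof -
  have "eval (chi X) (Comp (compile Oracle checker) (Pair (constP e) Ident)) n (hf X e n)" for n
  proof -
    have a: "eval (chi X) (Pair (constP e) Ident) n (pe e n)" by (rule ev_pair[OF eval_constP ev_id])
    have b: "eval (chi X) (compile Oracle checker) (pe e n) (sem (chi X) checker (pe e n))"
      by (rule compile_correct) (rule ev_oracle)
    show ?thesis unfolding hf_def by (rule ev_comp[OF a b])
  qed
  then show ?thesis unfolding K2_carrier_def by (auto intro!: comp_inI)
qed

lemma app2_S: "app2 Sf (ce e) (ce (Suc e))"
  unfolding app2_def Phi_def
proof
  fix n
  have "eval (join Sf (ce e)) PSprog n (Suc e)"
    unfolding PSprog_def
    using ev_comp[OF ev_comp[OF eval_constP ev_oracle] ev_succ, of "join Sf (ce e)" 1 n]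
    by (simp add: join_1 ce_def)
  then show "\<exists>c. encode c = Sf 0 \<and> eval (join Sf (ce e)) c n (ce (Suc e) n)"
    by (auto simp: Sf_def ce_def)
qed

lemma app2_H: "app2 (Hf X) (ce e) (hf X e)"
  unfolding app2_def Phi_def
proof
  fix n
  show "\<exists>c. encode c = Hf X 0 \<and> eval (join (Hf X) (ce e)) c n (hf X e n)"
    using eval_Pprog by (auto simp: Hf_def)
qed

lemma jump_iff_hf: "e \<in> jump X \<longleftrightarrow> hf X e \<noteq> zf"
proof -
  have "e \<in> jump X \<longleftrightarrow> (\<exists>w. vnum (chi X) e w)"
    unfolding jump_def using vnum_iff by simp
  also have "\<dots> \<longleftrightarrow> (\<exists>w. hf X e w \<noteq> 0)" by (simp add: hf_def sem_checker)
  also have "\<dots> \<longleftrightarrow> hf X e \<noteq> zf" by (auto simp: zf_def)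
  finally show ?thesis .
qed

theorem theorem6p9:
  fixes X Y :: "nat set"
  assumes "\<exists>f. K2_embeds_K1 X Y f"
  shows "turing_le (jump X) Y"
proof -
  from assms obtain f where emb: "K2_embeds_K1 X Y f" by blast
  have inj: "inj_on f (K2_carrier X)" using emb unfolding K2_embeds_K1_def by blast
  have app: "\<And>g h k. g \<in> K2_carrier X \<Longrightarrow> h \<in> K2_carrier X \<Longrightarrow> app2 g h k \<Longrightarrow>
      app1 Y (f g) (f h) (f k)" using emb unfolding K2_embeds_K1_def by blast
  have aS: "app1 Y (f Sf) (f (ce e)) (f (ce (Suc e)))" for e
    by (rule app[OF carrier_Sf carrier_ce app2_S])
  have aH: "app1 Y (f (Hf X)) (f (ce e)) (f (hf X e))" for e
    by (rule app[OF carrier_Hf carrier_ce app2_H])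
  from aS[of 0] obtain QS where QS0: "encode QS = f Sf" unfolding app1_def Phi_def by blast
  from aH[of 0] obtain QH where QH0: "encode QH = f (Hf X)" unfolding app1_def Phi_def by blast
  have QS: "eval (chi Y) QS (f (ce e)) (f (ce (Suc e)))" for e
  proof -
    from aS[of e] obtain c where "encode c = f Sf" "eval (chi Y) c (f (ce e)) (f (ce (Suc e)))"
      unfolding app1_def Phi_def by blast
    moreover have "c = QS" using calculation(1) QS0 encode_inj by simp
    ultimately show ?thesis by simp
  qed
  have QH: "eval (chi Y) QH (f (ce e)) (f (hf X e))" for e
  proof -
    from aH[of e] obtain c where "encode c = f (Hf X)" "eval (chi Y) c (f (ce e)) (f (hf X e))"
      unfolding app1_def Phi_def by blast
    moreover have "c = QH" using calculation(1) QH0 encode_inj by simp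
    ultimately show ?thesis by simp
  qed
  define IR where "IR = Rec (constP (f (ce 0))) (Comp QS Snd)"
  have iter: "eval (chi Y) IR (pe 0 k) (f (ce k))" for k
  proof (induction k)
    case 0 show ?case unfolding IR_def by (rule ev_rec0[OF eval_constP])
  next
    case (Suc k)
    have s: "eval (chi Y) Snd (pe (pe 0 k) (f (ce k))) (f (ce k))"
      using ev_snd[of "chi Y" "pe (pe 0 k) (f (ce k))"] by simp
    have d: "eval (chi Y) (Comp QS Snd) (pe (pe 0 k) (f (ce k))) (f (ce (Suc k)))"
      by (rule ev_comp[OF s QS])
    show ?case using ev_recS[OF Suc[unfolded IR_def] d] unfolding IR_def .
  qed
  define z0 where "z0 = f zf"
  define R where "R = Comp (ifP (compile Oracle (eEq Var (Cn z0))) (constP 0) (constP 1))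
                       (Comp QH (Comp IR (Pair Zero Ident)))"
  have evR: "eval (chi Y) R e (chi (jump X) e)" for e
  proof -
    have a: "eval (chi Y) (Comp IR (Pair Zero Ident)) e (f (ce e))"
      by (rule ev_comp[OF ev_pair[OF ev_zero ev_id] iter])
    have b: "eval (chi Y) (Comp QH (Comp IR (Pair Zero Ident))) e (f (hf X e))"
      by (rule ev_comp[OF a QH])
    have c: "eval (chi Y) (compile Oracle (eEq Var (Cn z0))) r (sem (chi Y) (eEq Var (Cn z0)) r)" for r
      by (rule compile_correct) (rule ev_oracle)
    have d: "eval (chi Y) (ifP (compile Oracle (eEq Var (Cn z0))) (constP 0) (constP 1)) (f (hf X e))
        (if f (hf X e) = z0 then 0 else 1)"
    proof -
      have "eval (chi Y) (ifP (compile Oracle (eEq Var (Cn z0))) (constP 0) (constP 1)) (f (hf X e))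
        (if sem (chi Y) (eEq Var (Cn z0)) (f (hf X e)) \<noteq> 0 then 0 else 1)"
        by (rule eval_ifP[OF c eval_constP eval_constP])
      moreover have eq: "(if f (hf X e) = z0 then 0 else 1) =
          (if sem (chi Y) (eEq Var (Cn z0)) (f (hf X e)) \<noteq> 0 then 0 else (1::nat))" by simp
      ultimately show ?thesis by (simp only: eq)
    qed
    have "(if f (hf X e) = z0 then 0 else 1) = chi (jump X) e"
    proof -
      have "f (hf X e) = f zf \<longleftrightarrow> hf X e = zf"
        by (rule inj_on_eq_iff[OF inj carrier_hf carrier_zf])
      then show ?thesis using jump_iff_hf[of e X] by (auto simp: chi_def z0_def)
    qed
    then show ?thesis using ev_comp[OF b d] unfolding R_def by simp
  qed
  show ?thesis
    unfolding turing_le_def computable_in_def Phi_def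
    using evR by blast
qed

end
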